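(* Let $k\ge3$ be odd and let $G$ be a connected $k$-uniform hypergraph (with at least one edge). Then $0$ is not an H-eigenvalue of the signless Laplacian tensor $\mathcal D+\mathcal A$, i.e. there is no nonzero $\mathbf x\in\mathbb R^n$ with $(\mathcal D+\mathcal A)\mathbf x^{k-1}=0$.
   Context: A $k$-uniform hypergraph $G=(V,E)$ has vertex set $V=[n]$ ($n\ge k$) and edge set $E$ of $k$-element subsets; $E_i=\{e\in E:i\in e\}$, $d_i=|E_i|$. $G$ is connected if any two distinct vertices are joined by a chain of edges with consecutive edges intersecting. $\mathcal A$: $a_{i_1\dots i_k}=\frac1{(k-1)!}$ if $\{i_1,\dots,i_k\}\in E$, else $0$; $\mathcal D$ diagonal with $d_{i\dots i}=d_i$; so $((\mathcal D+\mathcal A)\mathbf x^{k-1})_i=d_ix_i^{k-1}+\sum_{e\in E_i}\prod_{j\in e\setminus\{i\}}x_j$. An H-eigenvalue is an eigenvalue possessing a real eigenvector. *)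

theory Defs
  imports Complex_Main
begin

definition uniform_hypergraph :: "nat \<Rightarrow> nat \<Rightarrow> nat set set \<Rightarrow> bool" where
  "uniform_hypergraph n k E \<longleftrightarrow> n \<ge> k \<and> (\<forall>e\<in>E. e \<subseteq> {1..n} \<and> card e = k)"

definition edges_at :: "nat set set \<Rightarrow> nat \<Rightarrow> nat set set" where
  "edges_at E i = {e \<in> E. i \<in> e}"

definition degree :: "nat set set \<Rightarrow> nat \<Rightarrow> nat" where
  "degree E i = card (edges_at E i)"

definition hg_connected :: "nat \<Rightarrow> nat set set \<Rightarrow> bool" where
  "hg_connected n E \<longleftrightarrow>
     (\<forall>u\<in>{1..n}. \<forall>v\<in>{1..n}. u \<noteq> v \<longrightarrow>
        (\<exists>es. es \<noteq> [] \<and> set es \<subseteq> E \<and> u \<in> hd es \<and> v \<in> last es \<and>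
              (\<forall>j. Suc j < length es \<longrightarrow> es ! j \<inter> es ! Suc j \<noteq> {})))"

text \<open>The i-th component of (D + A) x^(k-1).\<close>
definition signless_lap_apply :: "nat \<Rightarrow> nat set set \<Rightarrow> (nat \<Rightarrow> real) \<Rightarrow> nat \<Rightarrow> real" where
  "signless_lap_apply k E x i =
     real (degree E i) * x i ^ (k - 1) + (\<Sum>e\<in>edges_at E i. \<Prod>j\<in>e - {i}. x j)"

definition is_H_eigenvalue_signless_lap :: "nat \<Rightarrow> nat \<Rightarrow> nat set set \<Rightarrow> real \<Rightarrow> bool" where
  "is_H_eigenvalue_signless_lap n k E lam \<longleftrightarrow>
     (\<exists>x :: nat \<Rightarrow> real. (\<exists>i\<in>{1..n}. x i \<noteq> 0) \<and>
        (\<forall>i\<in>{1..n}. signless_lap_apply k E x i = lam * x i ^ (k - 1)))"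

end

theory Submission
  imports Defs
begin

lemma prod_abs_lt:
  fixes x :: "nat \<Rightarrow> real"
  assumes "finite A" "j0 \<in> A" "\<forall>j\<in>A. \<bar>x j\<bar> \<le> M" "\<bar>x j0\<bar> < M"
  shows "(\<Prod>j\<in>A. \<bar>x j\<bar>) < M ^ card A"
proof -
  have M0: "M > 0" using assms(4) by linarith
  have "(\<Prod>j\<in>A. \<bar>x j\<bar>) = \<bar>x j0\<bar> * (\<Prod>j\<in>A-{j0}. \<bar>x j\<bar>)"
    using assms(1,2) by (simp add: prod.remove)
  also have "\<dots> \<le> \<bar>x j0\<bar> * M ^ card (A-{j0})"
  proof (rule mult_left_mono)
    have "(\<Prod>j\<in>A-{j0}. \<bar>x j\<bar>) \<le> (\<Prod>j\<in>A-{j0}. M)"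
      by (rule prod_mono) (use assms(3) in auto)
    then show "(\<Prod>j\<in>A-{j0}. \<bar>x j\<bar>) \<le> M ^ card (A-{j0})" by simp
  qed simp
  also have "\<dots> < M * M ^ card (A-{j0})"
    using assms(4) M0 by (intro mult_strict_right_mono) auto
  also have "\<dots> = M ^ card A"
    using assms(1,2) by (metis card_Suc_Diff1 power_Suc)
  finally show ?thesis .
qed

theorem proposition5p4:
  fixes n k :: nat and E :: "nat set set"
  assumes "k \<ge> 3" and "odd k"
    and "uniform_hypergraph n k E"
    and "hg_connected n E"
    and "E \<noteq> {}"
  shows "\<not> is_H_eigenvalue_signless_lap n k E 0"
proof
  assume "is_H_eigenvalue_signless_lap n k E 0"
  then obtain x :: "nat \<Rightarrow> real" where nz: "\<exists>i\<in>{1..n}. x i \<noteq> 0"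
    and eqs: "\<forall>i\<in>{1..n}. signless_lap_apply k E x i = 0"
    unfolding is_H_eigenvalue_signless_lap_def by auto
  have ev: "even (k - 1)" using assms(2) assms(1) by simp
  have nk: "n \<ge> k" and Esub: "\<forall>e\<in>E. e \<subseteq> {1..n} \<and> card e = k"
    using assms(3) unfolding uniform_hypergraph_def by auto
  have finE: "finite E"
    by (rule finite_subset[of E "Pow {1..n}"]) (use Esub in auto)
  define M where "M = Max ((\<lambda>j. \<bar>x j\<bar>) ` {1..n})"
  have ne: "{1..n} \<noteq> {}" using nk assms(1) by auto
  have Mge: "\<forall>j\<in>{1..n}. \<bar>x j\<bar> \<le> M" unfolding M_def by auto
  obtain i where i: "i \<in> {1..n}" "\<bar>x i\<bar> = M"
  proof -
    have "M \<in> (\<lambda>j. \<bar>x j\<bar>) ` {1..n}" unfolding M_def using ne by (intro Max_in) auto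
    then show ?thesis using that by auto
  qed
  have M0: "M > 0"
  proof -
    obtain j where "j \<in> {1..n}" "x j \<noteq> 0" using nz by blast
    then have "0 < \<bar>x j\<bar>" "\<bar>x j\<bar> \<le> M" using Mge by auto
    then show ?thesis by linarith
  qed
  have powM: "\<And>j. \<bar>x j\<bar> = M \<Longrightarrow> x j ^ (k - 1) = M ^ (k - 1)"
  proof -
    fix j assume "\<bar>x j\<bar> = M"
    have "x j ^ (k - 1) = \<bar>x j\<bar> ^ (k - 1)" using ev by (simp add: power_even_abs)
    then show "x j ^ (k - 1) = M ^ (k - 1)" using \<open>\<bar>x j\<bar> = M\<close> by simp
  qed
  have key: "(\<Prod>l\<in>e-{j}. x l) = - (M ^ (k - 1))"
    if j: "j \<in> {1..n}" "\<bar>x j\<bar> = M" and e: "e \<in> edges_at E j" for j e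
  proof -
    let ?S = "edges_at E j"
    have finS: "finite ?S" using finE unfolding edges_at_def by auto
    have cardj: "\<And>e. e \<in> ?S \<Longrightarrow> card (e - {j}) = k - 1 \<and> e - {j} \<subseteq> {1..n}"
    proof -
      fix e assume "e \<in> ?S"
      then have "e \<in> E" "j \<in> e" unfolding edges_at_def by auto
      moreover have ce: "card e = k" "e \<subseteq> {1..n}" using Esub \<open>e \<in> E\<close> by auto
      moreover have "finite e" using ce(2) finite_subset by blast
      ultimately show "card (e - {j}) = k - 1 \<and> e - {j} \<subseteq> {1..n}"
        by auto
    qed
    have bnd: "\<And>e. e \<in> ?S \<Longrightarrow> \<bar>\<Prod>l\<in>e-{j}. x l\<bar> \<le> M ^ (k - 1)"
    proof -
      fix e assume eS: "e \<in> ?S"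
      have "\<bar>\<Prod>l\<in>e-{j}. x l\<bar> = (\<Prod>l\<in>e-{j}. \<bar>x l\<bar>)" by (simp add: abs_prod)
      also have "\<dots> \<le> (\<Prod>l\<in>e-{j}. M)"
        by (rule prod_mono) (use cardj[OF eS] Mge in auto)
      also have "\<dots> = M ^ (k - 1)" using cardj[OF eS] by simp
      finally show "\<bar>\<Prod>l\<in>e-{j}. x l\<bar> \<le> M ^ (k - 1)" .
    qed
    have "0 = signless_lap_apply k E x j" using eqs j by auto
    also have "\<dots> = (\<Sum>e\<in>?S. M ^ (k - 1) + (\<Prod>l\<in>e-{j}. x l))"
      unfolding signless_lap_apply_def degree_def using powM[OF j(2)]
      by (simp add: sum.distrib)
    finally have s0: "(\<Sum>e\<in>?S. M ^ (k - 1) + (\<Prod>l\<in>e-{j}. x l)) = 0" by simp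
    have nn: "\<forall>e\<in>?S. 0 \<le> M ^ (k - 1) + (\<Prod>l\<in>e-{j}. x l)"
    proof
      fix e assume "e \<in> ?S"
      then have "- (\<Prod>l\<in>e-{j}. x l) \<le> M ^ (k - 1)" using bnd abs_le_D2 by blast
      then show "0 \<le> M ^ (k - 1) + (\<Prod>l\<in>e-{j}. x l)" by linarith
    qed
    have "\<forall>e\<in>?S. M ^ (k - 1) + (\<Prod>l\<in>e-{j}. x l) = 0"
      using sum_nonneg_eq_0_iff[OF finS, of "\<lambda>e. M ^ (k - 1) + (\<Prod>l\<in>e-{j}. x l)"] s0 nn
      by simp
    then have "M ^ (k - 1) + (\<Prod>l\<in>e-{j}. x l) = 0" using e by blast
    then show ?thesis by linarith
  qed
  obtain v where v: "v \<in> {1..n}" "v \<noteq> i"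
  proof -
    have "card {1..n} \<ge> 2" using nk assms(1) by simp
    then have "\<exists>v\<in>{1..n}. v \<noteq> i"
    proof (cases "i = 1")
      case True then show ?thesis using nk assms(1) by (intro bexI[of _ 2]) auto
    next
      case False then show ?thesis using nk assms(1) by (intro bexI[of _ 1]) auto
    qed
    then show ?thesis using that by blast
  qed
  have "\<exists>es. es \<noteq> [] \<and> set es \<subseteq> E \<and> i \<in> hd es"
  proof -
    have "\<forall>u\<in>{1..n}. \<forall>w\<in>{1..n}. u \<noteq> w \<longrightarrow>
        (\<exists>es. es \<noteq> [] \<and> set es \<subseteq> E \<and> u \<in> hd es \<and> w \<in> last es \<and>
              (\<forall>j. Suc j < length es \<longrightarrow> es ! j \<inter> es ! Suc j \<noteq> {}))"
      using assms(4) unfolding hg_connected_def .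
    then have "\<exists>es. es \<noteq> [] \<and> set es \<subseteq> E \<and> i \<in> hd es \<and> v \<in> last es \<and>
              (\<forall>j. Suc j < length es \<longrightarrow> es ! j \<inter> es ! Suc j \<noteq> {})"
      using i(1) v by simp
    then show ?thesis by auto
  qed
  then obtain es where es: "es \<noteq> []" "set es \<subseteq> E" "i \<in> hd es" by blast
  define e where "e = hd es"
  have eE: "e \<in> E" "i \<in> e" using es e_def by auto
  have eSi: "e \<in> edges_at E i" using eE unfolding edges_at_def by auto
  have esub: "e \<subseteq> {1..n}" "card e = k" using Esub eE by auto
  have fine: "finite e" using esub assms(1) card.infinite by fastforce
  have Pi: "(\<Prod>l\<in>e-{i}. x l) = - (M ^ (k - 1))" using key[OF i eSi] .
  have allM: "\<bar>x j\<bar> = M" if "j \<in> e - {i}" for j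
  proof (rule ccontr)
    assume "\<bar>x j\<bar> \<noteq> M"
    moreover have "\<bar>x j\<bar> \<le> M" using Mge esub that by auto
    ultimately have "\<bar>x j\<bar> < M" by linarith
    then have "(\<Prod>l\<in>e-{i}. \<bar>x l\<bar>) < M ^ card (e - {i})"
      by (intro prod_abs_lt) (use fine that Mge esub in auto)
    moreover have "card (e - {i}) = k - 1" using esub eE fine by simp
    moreover have "(\<Prod>l\<in>e-{i}. \<bar>x l\<bar>) = M ^ (k - 1)"
      using Pi M0 by (simp add: abs_prod[symmetric])
    ultimately show False by simp
  qed
  have alleq: "x j = x i" if "j \<in> e - {i}" for j
  proof -
    have j: "j \<in> {1..n}" "\<bar>x j\<bar> = M" using allM that esub by auto
    have eSj: "e \<in> edges_at E j" using eE that unfolding edges_at_def by auto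
    have Pj: "(\<Prod>l\<in>e-{j}. x l) = - (M ^ (k - 1))" using key[OF j eSj] .
    have "x i * (\<Prod>l\<in>e-{i}. x l) = (\<Prod>l\<in>e. x l)"
      using fine eE by (simp add: prod.remove)
    also have "\<dots> = x j * (\<Prod>l\<in>e-{j}. x l)"
      using fine that by (simp add: prod.remove)
    finally have "x i * M ^ (k - 1) = x j * M ^ (k - 1)" using Pi Pj by simp
    then show ?thesis using M0 by simp
  qed
  have "(\<Prod>l\<in>e-{i}. x l) = (\<Prod>l\<in>e-{i}. x i)"
    by (rule prod.cong) (use alleq in auto)
  also have "\<dots> = x i ^ (k - 1)" using esub eE fine by simp
  also have "\<dots> = M ^ (k - 1)" using powM i(2) by simp
  finally have "M ^ (k - 1) = - (M ^ (k - 1))" using Pi by simp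
  then show False using M0 by simp
qed

end
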